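(* Let $Q$ be an admissible orientation of $\tilde A_n$ and $I,J$ indecomposable linearized semigroup ideals of $\Bbbk Q$ of type II such that $\Gamma_I\cup\Gamma_J=\Gamma$. Assume that, for each isolated vertex $\omega$ of $\Gamma_I\cap\Gamma_J$, the edge of $\Gamma_J$ adjacent to $\omega$ is a source of $Q$. Then $IJ$ decomposes into a direct sum of two non-zero ideals.
   Context: $\Bbbk$ is an algebraically closed field. An admissible orientation of $\tilde A_n$ is a finite quiver $Q$ with $n$ vertices whose underlying undirected graph is a cycle, having no oriented cycle and at least one source. Paths include trivial paths $\varepsilon_x$; products are concatenations when defined, $0$ otherwise. Maximal paths are paths not properly contained as subpaths of other paths. A linearized semigroup ideal is an ideal spanned by a set $X$ of paths with $\alpha\omega\beta\in X$ whenever $\omega\in X$ and $\alpha\omega\beta$ is defined. $\Gamma$: vertices the maximal paths, edges the sources and sinks of $Q$, edge $x$ joining the two maximal paths having $x$ as an endpoint. $\Gamma_I$: vertices the maximal paths in $I$, edges the sources/sinks $x$ with $\varepsilon_x\in I$. An indecomposable (non-zero, not a direct sum of two non-zero ideals) linearized semigroup ideal $I$ is of type II if $\Gamma_I$ is a chain (path graph) with at least two vertices which is not all of $\Gamma$. *)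

theory Defs
  imports "HOL-Computational_Algebra.Polynomial"
begin

text \<open>The quiver: vertices 0..n-1 arranged on a cycle; arrow i (for i < n) joins
  vertex i and vertex (i+1) mod n, oriented i -> (i+1) mod n iff ori i.
  Every finite quiver whose underlying graph is a cycle with n vertices is
  isomorphic to one of these.\<close>

definition asrc :: "nat \<Rightarrow> (nat \<Rightarrow> bool) \<Rightarrow> nat \<Rightarrow> nat" where
  "asrc n ori a = (if ori a then a else Suc a mod n)"

definition atgt :: "nat \<Rightarrow> (nat \<Rightarrow> bool) \<Rightarrow> nat \<Rightarrow> nat" where
  "atgt n ori a = (if ori a then Suc a mod n else a)"

type_synonym path = "nat \<times> nat list"

text \<open>A path is (start vertex, list of arrows in order of traversal);
  the trivial path at x is (x, []).\<close>

fun is_walk :: "(nat \<Rightarrow> nat) \<Rightarrow> (nat \<Rightarrow> nat) \<Rightarrow> nat \<Rightarrow> nat list \<Rightarrow> bool" where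
  "is_walk s t x [] = True"
| "is_walk s t x (a # as) = (s a = x \<and> is_walk s t (t a) as)"

fun wend :: "(nat \<Rightarrow> nat) \<Rightarrow> nat \<Rightarrow> nat list \<Rightarrow> nat" where
  "wend t x [] = x"
| "wend t x (a # as) = wend t (t a) as"

definition Paths :: "nat \<Rightarrow> (nat \<Rightarrow> bool) \<Rightarrow> path set" where
  "Paths n ori = {(x, as). x < n \<and> set as \<subseteq> {..<n} \<and> is_walk (asrc n ori) (atgt n ori) x as}"

definition pend :: "nat \<Rightarrow> (nat \<Rightarrow> bool) \<Rightarrow> path \<Rightarrow> nat" where
  "pend n ori p = wend (atgt n ori) (fst p) (snd p)"

text \<open>Product of paths (composition written right to left): p q means
  "first q, then p"; defined iff q ends where p starts.\<close>

definition pmul :: "nat \<Rightarrow> (nat \<Rightarrow> bool) \<Rightarrow> path \<Rightarrow> path \<Rightarrow> path option" where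
  "pmul n ori p q = (if pend n ori q = fst p then Some (fst q, snd q @ snd p) else None)"

definition is_source :: "nat \<Rightarrow> (nat \<Rightarrow> bool) \<Rightarrow> nat \<Rightarrow> bool" where
  "is_source n ori x \<longleftrightarrow> x < n \<and> (\<forall>a<n. atgt n ori a \<noteq> x)"

definition is_sink :: "nat \<Rightarrow> (nat \<Rightarrow> bool) \<Rightarrow> nat \<Rightarrow> bool" where
  "is_sink n ori x \<longleftrightarrow> x < n \<and> (\<forall>a<n. asrc n ori a \<noteq> x)"

definition admissible :: "nat \<Rightarrow> (nat \<Rightarrow> bool) \<Rightarrow> bool" where
  "admissible n ori \<longleftrightarrow>
     \<not> (\<exists>p \<in> Paths n ori. snd p \<noteq> [] \<and> pend n ori p = fst p) \<and> (\<exists>x. is_source n ori x)"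

definition kQ :: "nat \<Rightarrow> (nat \<Rightarrow> bool) \<Rightarrow> (path \<Rightarrow> 'k::field) set" where
  "kQ n ori = {f. finite {p. f p \<noteq> 0} \<and> {p. f p \<noteq> 0} \<subseteq> Paths n ori}"

definition conv :: "nat \<Rightarrow> (nat \<Rightarrow> bool) \<Rightarrow> (path \<Rightarrow> 'k::field) \<Rightarrow> (path \<Rightarrow> 'k) \<Rightarrow> path \<Rightarrow> 'k" where
  "conv n ori f g r =
     (\<Sum>(p, q) \<in> {(p, q). p \<in> Paths n ori \<and> q \<in> Paths n ori \<and> pmul n ori p q = Some r}. f p * g q)"

definition is_ideal :: "nat \<Rightarrow> (nat \<Rightarrow> bool) \<Rightarrow> (path \<Rightarrow> 'k::field) set \<Rightarrow> bool" where
  "is_ideal n ori A \<longleftrightarrow> A \<subseteq> kQ n ori \<and> (\<lambda>_. 0) \<in> A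
     \<and> (\<forall>f\<in>A. \<forall>g\<in>A. (\<lambda>r. f r + g r) \<in> A)
     \<and> (\<forall>c f. f \<in> A \<longrightarrow> (\<lambda>r. c * f r) \<in> A)
     \<and> (\<forall>f\<in>A. \<forall>g\<in>kQ n ori. conv n ori g f \<in> A \<and> conv n ori f g \<in> A)"

definition delta :: "path \<Rightarrow> path \<Rightarrow> 'k::field" where
  "delta p = (\<lambda>r. if r = p then 1 else 0)"

text \<open>The span of {delta p | p \<in> X} is the set of
  finitely supported functions supported in X.\<close>

definition lin_semigroup_ideal :: "nat \<Rightarrow> (nat \<Rightarrow> bool) \<Rightarrow> (path \<Rightarrow> 'k::field) set \<Rightarrow> bool" where
  "lin_semigroup_ideal n ori I \<longleftrightarrow> (\<exists>X \<subseteq> Paths n ori.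
     (\<forall>\<omega>\<in>X. \<forall>\<alpha>\<in>Paths n ori. \<forall>\<beta>\<in>Paths n ori. \<forall>r s.
         pmul n ori \<omega> \<beta> = Some r \<and> pmul n ori \<alpha> r = Some s \<longrightarrow> s \<in> X)
     \<and> I = {f \<in> kQ n ori. \<forall>p. f p \<noteq> 0 \<longrightarrow> p \<in> X})"

definition ideal_prod :: "nat \<Rightarrow> (nat \<Rightarrow> bool) \<Rightarrow> (path \<Rightarrow> 'k::field) set \<Rightarrow> (path \<Rightarrow> 'k) set \<Rightarrow> (path \<Rightarrow> 'k) set" where
  "ideal_prod n ori I J = \<Inter> {K. is_ideal n ori K \<and> (\<forall>f\<in>I. \<forall>g\<in>J. conv n ori f g \<in> K)}"

definition decomposable :: "nat \<Rightarrow> (nat \<Rightarrow> bool) \<Rightarrow> (path \<Rightarrow> 'k::field) set \<Rightarrow> bool" where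
  "decomposable n ori I \<longleftrightarrow> (\<exists>A B. is_ideal n ori A \<and> is_ideal n ori B
     \<and> A \<noteq> {\<lambda>_. 0} \<and> B \<noteq> {\<lambda>_. 0} \<and> A \<inter> B = {\<lambda>_. 0}
     \<and> I = {\<lambda>r. a r + b r | a b. a \<in> A \<and> b \<in> B})"

definition indecomposable :: "nat \<Rightarrow> (nat \<Rightarrow> bool) \<Rightarrow> (path \<Rightarrow> 'k::field) set \<Rightarrow> bool" where
  "indecomposable n ori I \<longleftrightarrow> is_ideal n ori I \<and> I \<noteq> {\<lambda>_. 0} \<and> \<not> decomposable n ori I"

definition subpath :: "nat \<Rightarrow> (nat \<Rightarrow> bool) \<Rightarrow> path \<Rightarrow> path \<Rightarrow> bool" where
  "subpath n ori p q \<longleftrightarrow> (\<exists>\<alpha>\<in>Paths n ori. \<exists>\<beta>\<in>Paths n ori. \<exists>r.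
      pmul n ori p \<beta> = Some r \<and> pmul n ori \<alpha> r = Some q)"

definition maximal_path :: "nat \<Rightarrow> (nat \<Rightarrow> bool) \<Rightarrow> path \<Rightarrow> bool" where
  "maximal_path n ori p \<longleftrightarrow> p \<in> Paths n ori \<and> (\<forall>q\<in>Paths n ori. subpath n ori p q \<longrightarrow> q = p)"

text \<open>Vertices of \<Gamma>: maximal paths. Edges of \<Gamma>: sources and sinks; edge x joins
  the maximal paths having x as an endpoint.\<close>

definition GammaV :: "nat \<Rightarrow> (nat \<Rightarrow> bool) \<Rightarrow> path set" where
  "GammaV n ori = {\<mu>. maximal_path n ori \<mu>}"

definition GammaE :: "nat \<Rightarrow> (nat \<Rightarrow> bool) \<Rightarrow> nat set" where
  "GammaE n ori = {x. is_source n ori x \<or> is_sink n ori x}"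

definition ends :: "nat \<Rightarrow> (nat \<Rightarrow> bool) \<Rightarrow> nat \<Rightarrow> path set" where
  "ends n ori x = {\<mu>. maximal_path n ori \<mu> \<and> (fst \<mu> = x \<or> pend n ori \<mu> = x)}"

definition GammaIV :: "nat \<Rightarrow> (nat \<Rightarrow> bool) \<Rightarrow> (path \<Rightarrow> 'k::field) set \<Rightarrow> path set" where
  "GammaIV n ori I = {\<mu>. maximal_path n ori \<mu> \<and> delta \<mu> \<in> I}"

definition GammaIE :: "nat \<Rightarrow> (nat \<Rightarrow> bool) \<Rightarrow> (path \<Rightarrow> 'k::field) set \<Rightarrow> nat set" where
  "GammaIE n ori I = {x. (is_source n ori x \<or> is_sink n ori x) \<and> delta (x, []) \<in> I}"

definition is_chain :: "'v set \<Rightarrow> 'e set \<Rightarrow> ('e \<Rightarrow> 'v set) \<Rightarrow> bool" where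
  "is_chain V E en \<longleftrightarrow> (\<exists>vs es. distinct vs \<and> distinct es \<and> set vs = V \<and> set es = E
     \<and> length vs = Suc (length es) \<and> (\<forall>i<length es. en (es ! i) = {vs ! i, vs ! Suc i}))"

definition type_II :: "nat \<Rightarrow> (nat \<Rightarrow> bool) \<Rightarrow> (path \<Rightarrow> 'k::field) set \<Rightarrow> bool" where
  "type_II n ori I \<longleftrightarrow> is_chain (GammaIV n ori I) (GammaIE n ori I) (ends n ori)
     \<and> 2 \<le> card (GammaIV n ori I)
     \<and> (GammaIV n ori I \<noteq> GammaV n ori \<or> GammaIE n ori I \<noteq> GammaE n ori)"

end

theory Submission
  imports Defs
begin

lemma wend_append: "wend t x (as @ bs) = wend t (wend t x as) bs"
  by (induction as arbitrary: x) auto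
lemma is_walk_append: "is_walk s t x (as @ bs) = (is_walk s t x as \<and> is_walk s t (wend t x as) bs)"
  by (induction as arbitrary: x) auto
lemma wend_last: "as \<noteq> [] \<Longrightarrow> wend t x as = t (last as)"
  by (induction as arbitrary: x) auto
lemma suc_mod_inj: "b < n \<Longrightarrow> c < n \<Longrightarrow> Suc b mod n = Suc c mod n \<Longrightarrow> b = c"
  by (auto simp: mod_if split: if_splits)

lemma asrc_lt: "a < n \<Longrightarrow> asrc n ori a < n" by (auto simp: asrc_def)
lemma atgt_lt: "a < n \<Longrightarrow> atgt n ori a < n" by (auto simp: atgt_def)

lemma next_unique: "a<n \<Longrightarrow> b<n \<Longrightarrow> c<n \<Longrightarrow> atgt n ori a = asrc n ori b \<Longrightarrow> atgt n ori a = asrc n ori c \<Longrightarrow> b = c"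
  by (auto simp: asrc_def atgt_def split: if_splits dest: suc_mod_inj)
lemma prev_unique: "a<n \<Longrightarrow> b<n \<Longrightarrow> c<n \<Longrightarrow> asrc n ori a = atgt n ori b \<Longrightarrow> asrc n ori a = atgt n ori c \<Longrightarrow> b = c"
  by (auto simp: asrc_def atgt_def split: if_splits dest: suc_mod_inj)
lemma ori_prop: "a<n \<Longrightarrow> b<n \<Longrightarrow> atgt n ori a = asrc n ori b \<Longrightarrow> ori b = ori a"
  by (auto simp: asrc_def atgt_def split: if_splits dest: suc_mod_inj)
lemma not_source_sink: "is_source n ori x \<Longrightarrow> is_sink n ori x \<Longrightarrow> False"
  unfolding is_source_def is_sink_def
  by (metis asrc_def atgt_def)

lemma mem_Paths: "(x, as) \<in> Paths n ori \<longleftrightarrow> x < n \<and> set as \<subseteq> {..<n} \<and> is_walk (asrc n ori) (atgt n ori) x as"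
  by (simp add: Paths_def)
lemma pmul_Some: "pmul n ori p q = Some r \<longleftrightarrow> pend n ori q = fst p \<and> r = (fst q, snd q @ snd p)"
  by (auto simp: pmul_def)

lemma wend_lt: "x < n \<Longrightarrow> set as \<subseteq> {..<n} \<Longrightarrow> wend (atgt n ori) x as < n"
  by (induction as arbitrary: x) (auto simp: atgt_lt)
lemma pend_lt: "p \<in> Paths n ori \<Longrightarrow> pend n ori p < n"
  by (cases p) (auto simp: Paths_def pend_def wend_lt)
lemma fst_lt: "p \<in> Paths n ori \<Longrightarrow> fst p < n"
  by (cases p) (auto simp: Paths_def)
lemma triv_Paths: "x < n \<Longrightarrow> (x, []) \<in> Paths n ori" by (simp add: Paths_def)
lemma Paths_concat: "q \<in> Paths n ori \<Longrightarrow> p \<in> Paths n ori \<Longrightarrow> pend n ori q = fst p \<Longrightarrow>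
   (fst q, snd q @ snd p) \<in> Paths n ori \<and> pend n ori (fst q, snd q @ snd p) = pend n ori p"
  by (cases p; cases q) (auto simp: Paths_def pend_def is_walk_append wend_append)

lemma subpath_iff: "subpath n ori p q \<longleftrightarrow> (\<exists>\<alpha>\<in>Paths n ori. \<exists>\<beta>\<in>Paths n ori. pend n ori \<beta> = fst p \<and> pend n ori p = fst \<alpha>
   \<and> q = (fst \<beta>, snd \<beta> @ snd p @ snd \<alpha>))"
  unfolding subpath_def pmul_def by (auto simp: pend_def wend_append)


lemma pend_triv[simp]: "pend n ori (x, []) = x" by (simp add: pend_def)

lemma subpath_refl: "p \<in> Paths n ori \<Longrightarrow> subpath n ori p p"
  unfolding subpath_iff
  by (rule bexI[of _ "(pend n ori p, [])"], rule bexI[of _ "(fst p, [])"])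
     (use triv_Paths[OF pend_lt] triv_Paths[OF fst_lt] in \<open>auto simp: pend_def\<close>)

lemma subpath_Paths: "subpath n ori p q \<Longrightarrow> p \<in> Paths n ori \<Longrightarrow> q \<in> Paths n ori"
proof -
  assume "subpath n ori p q" "p \<in> Paths n ori"
  then obtain \<alpha> \<beta> where a: "\<alpha> \<in> Paths n ori" "\<beta> \<in> Paths n ori" "pend n ori \<beta> = fst p" "pend n ori p = fst \<alpha>"
    "q = (fst \<beta>, snd \<beta> @ snd p @ snd \<alpha>)" unfolding subpath_iff by blast
  from Paths_concat[OF a(2) \<open>p \<in> _\<close> a(3)] have "(fst \<beta>, snd \<beta> @ snd p) \<in> Paths n ori"
     "pend n ori (fst \<beta>, snd \<beta> @ snd p) = pend n ori p" by auto
  from Paths_concat[OF this(1) a(1)] this(2) a(4) show ?thesis using a(5) by auto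
qed

lemma subpath_len: "subpath n ori p q \<Longrightarrow> length (snd p) \<le> length (snd q)"
  unfolding subpath_iff by auto

lemma subpath_len_eq: "subpath n ori p q \<Longrightarrow> length (snd q) \<le> length (snd p) \<Longrightarrow> q = p"
  unfolding subpath_iff by (cases p) (auto simp: pend_def)

lemma subpath_trans: "subpath n ori p q \<Longrightarrow> subpath n ori q r \<Longrightarrow> p \<in> Paths n ori \<Longrightarrow> subpath n ori p r"
proof -
  assume pq: "subpath n ori p q" and qr: "subpath n ori q r" and p: "p \<in> Paths n ori"
  then obtain \<alpha> \<beta> where a: "\<alpha> \<in> Paths n ori" "\<beta> \<in> Paths n ori" "pend n ori \<beta> = fst p" "pend n ori p = fst \<alpha>"
    "q = (fst \<beta>, snd \<beta> @ snd p @ snd \<alpha>)" unfolding subpath_iff by blast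
  from qr obtain \<alpha>' \<beta>' where b: "\<alpha>' \<in> Paths n ori" "\<beta>' \<in> Paths n ori" "pend n ori \<beta>' = fst q" "pend n ori q = fst \<alpha>'"
    "r = (fst \<beta>', snd \<beta>' @ snd q @ snd \<alpha>')" unfolding subpath_iff by blast
  have c1: "(fst \<beta>', snd \<beta>' @ snd \<beta>) \<in> Paths n ori" "pend n ori (fst \<beta>', snd \<beta>' @ snd \<beta>) = pend n ori \<beta>"
    using Paths_concat[OF b(2) a(2)] b(3) a(5) by auto
  have "pend n ori q = pend n ori \<alpha>"
    using a(5) a(3) a(4) by (simp add: pend_def wend_append)
  then have c2: "(fst \<alpha>, snd \<alpha> @ snd \<alpha>') \<in> Paths n ori" "pend n ori (fst \<alpha>, snd \<alpha> @ snd \<alpha>') = pend n ori \<alpha>'"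
    using Paths_concat[OF a(1) b(1)] b(4) by auto
  show ?thesis unfolding subpath_iff
    apply (rule bexI[OF _ c2(1)], rule bexI[OF _ c1(1)])
    using c1(2) a b by auto
qed

lemma len_bound:
  assumes adm: "admissible n ori" and p: "p \<in> Paths n ori"
  shows "length (snd p) < n"
proof (rule ccontr)
  obtain x as where pe: "p = (x, as)" by (cases p)
  assume "\<not> length (snd p) < n"
  then have L: "n \<le> length as" using pe by simp
  define v where "v i = wend (atgt n ori) x (take i as)" for i
  have x: "x < n" "set as \<subseteq> {..<n}" "is_walk (asrc n ori) (atgt n ori) x as" using p pe by (auto simp: Paths_def)
  have vlt: "v ` {..length as} \<subseteq> {..<n}"
    using x by (auto simp: v_def intro!: wend_lt dest: in_set_takeD)
  have "\<not> inj_on v {..length as}"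
  proof
    assume "inj_on v {..length as}"
    then have "card (v ` {..length as}) = Suc (length as)" by (simp add: card_image)
    moreover have "card (v ` {..length as}) \<le> n" using card_mono[OF _ vlt] by simp
    ultimately show False using L by simp
  qed
  then obtain i j where ij: "i \<le> length as" "j \<le> length as" "i \<noteq> j" "v i = v j"
    unfolding inj_on_def by auto
  then obtain i j where ij: "i \<le> length as" "j \<le> length as" "i < j" "v i = v j"
    by (metis linorder_neq_iff)
  define c where "c = take (j - i) (drop i as)"
  have tj: "take j as = take i as @ c" using take_add[of i "j - i" as] ij by (simp add: c_def)
  have "is_walk (asrc n ori) (atgt n ori) x (take j as)"
    using x(3) is_walk_append[of _ _ x "take j as" "drop j as"] by simp
  then have w: "is_walk (asrc n ori) (atgt n ori) (v i) c" using tj by (simp add: is_walk_append v_def)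
  have e: "wend (atgt n ori) (v i) c = v i" using ij(4) tj by (simp add: v_def wend_append)
  have cne: "c \<noteq> []" using ij by (simp add: c_def)
  have "(v i, c) \<in> Paths n ori"
    using w vlt ij x(2) by (auto simp: Paths_def c_def dest: in_set_takeD in_set_dropD)
  then show False using adm e cne unfolding admissible_def by (auto simp: pend_def)
qed

lemma exists_max:
  assumes adm: "admissible n ori" and r: "r \<in> Paths n ori"
  shows "\<exists>\<mu>. maximal_path n ori \<mu> \<and> subpath n ori r \<mu>"
proof -
  define P where "P k = (\<exists>q\<in>Paths n ori. subpath n ori r q \<and> length (snd q) = k)" for k
  have "P (length (snd r))" unfolding P_def using r subpath_refl[OF r] by blast
  moreover have "\<forall>y. P y \<longrightarrow> y \<le> n"
  proof (intro allI impI)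
    fix y assume "P y"
    then obtain q where "q \<in> Paths n ori" "length (snd q) = y" unfolding P_def by blast
    then show "y \<le> n" using len_bound[OF adm, of q] by simp
  qed
  ultimately obtain k where k: "P k" "\<forall>y. P y \<longrightarrow> y \<le> k" using Nat.ex_has_greatest_nat[of P "length (snd r)" n] by blast
  then obtain q where q: "q \<in> Paths n ori" "subpath n ori r q" "length (snd q) = k" unfolding P_def by blast
  have "maximal_path n ori q" unfolding maximal_path_def
  proof (intro conjI ballI impI)
    fix q' assume "q' \<in> Paths n ori" "subpath n ori q q'"
    then have "P (length (snd q'))" unfolding P_def using subpath_trans[OF q(2) \<open>subpath n ori q q'\<close> r] by blast
    then have "length (snd q') \<le> length (snd q)" using k q by simp
    then show "q' = q" using subpath_len_eq[OF \<open>subpath n ori q q'\<close>] by simp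
  qed (fact q(1))
  then show ?thesis using q by blast
qed


lemma max_source:
  assumes m: "maximal_path n ori \<mu>" shows "is_source n ori (fst \<mu>)"
proof -
  have mu: "\<mu> \<in> Paths n ori" and mx: "\<forall>q\<in>Paths n ori. subpath n ori \<mu> q \<longrightarrow> q = \<mu>"
    using m by (auto simp: maximal_path_def)
  obtain x as where pe: "\<mu> = (x, as)" by (cases \<mu>)
  show ?thesis unfolding is_source_def
  proof (intro conjI allI impI)
    show "fst \<mu> < n" using fst_lt[OF mu] .
    fix c assume c: "c < n"
    show "atgt n ori c \<noteq> fst \<mu>"
    proof
      assume e: "atgt n ori c = fst \<mu>"
      define q where "q = (asrc n ori c, c # as)"
      have q: "q \<in> Paths n ori" using mu pe e c by (auto simp: Paths_def q_def asrc_lt)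
      have t1: "(pend n ori \<mu>, []) \<in> Paths n ori" using triv_Paths[OF pend_lt[OF mu]] .
      have t2: "(asrc n ori c, [c]) \<in> Paths n ori" using c by (auto simp: Paths_def asrc_lt)
      have "subpath n ori \<mu> q" unfolding subpath_iff
        apply (rule bexI[OF _ t1], rule bexI[OF _ t2])
        using pe e by (auto simp: q_def pend_def)
      then have "q = \<mu>" using mx q by blast
      then show False using pe by (simp add: q_def)
    qed
  qed
qed

lemma max_sink:
  assumes m: "maximal_path n ori \<mu>" shows "is_sink n ori (pend n ori \<mu>)"
proof -
  have mu: "\<mu> \<in> Paths n ori" and mx: "\<forall>q\<in>Paths n ori. subpath n ori \<mu> q \<longrightarrow> q = \<mu>"
    using m by (auto simp: maximal_path_def)
  obtain x as where pe: "\<mu> = (x, as)" by (cases \<mu>)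
  show ?thesis unfolding is_sink_def
  proof (intro conjI allI impI)
    show "pend n ori \<mu> < n" using pend_lt[OF mu] .
    fix c assume c: "c < n"
    show "asrc n ori c \<noteq> pend n ori \<mu>"
    proof
      assume e: "asrc n ori c = pend n ori \<mu>"
      define q where "q = (x, as @ [c])"
      have q: "q \<in> Paths n ori" using mu pe e c by (auto simp: Paths_def q_def is_walk_append pend_def)
      have t1: "(pend n ori \<mu>, [c]) \<in> Paths n ori" using c e[symmetric] by (auto simp: Paths_def asrc_lt)
      have t2: "(x, []) \<in> Paths n ori" using triv_Paths[OF fst_lt[OF mu]] pe by simp
      have "subpath n ori \<mu> q" unfolding subpath_iff
        apply (rule bexI[OF _ t1], rule bexI[OF _ t2])
        using pe e by (auto simp: q_def pend_def)
      then have "q = \<mu>" using mx q by blast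
      then show False using pe by (simp add: q_def)
    qed
  qed
qed

lemma fwd_det: "a < n \<Longrightarrow> set w \<subseteq> {..<n} \<Longrightarrow> set w' \<subseteq> {..<n} \<Longrightarrow>
  is_walk (asrc n ori) (atgt n ori) (atgt n ori a) w \<Longrightarrow> is_walk (asrc n ori) (atgt n ori) (atgt n ori a) w' \<Longrightarrow>
  (\<exists>z. w' = w @ z) \<or> (\<exists>z. w = w' @ z)"
proof (induction w arbitrary: a w')
  case Nil then show ?case by simp
next
  case (Cons b w)
  note IH = Cons.IH and pr = Cons.prems
  show ?case
  proof (cases w')
    case Nil then show ?thesis by simp
  next
    case (Cons c w'')
    have bc: "b < n" "c < n" "atgt n ori a = asrc n ori b" "atgt n ori a = asrc n ori c"
      using pr Cons by auto
    have "b = c" using next_unique[OF pr(1) bc] .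
    have "(\<exists>z. w'' = w @ z) \<or> (\<exists>z. w = w'' @ z)"
      apply (rule IH[of b w''])
      using pr Cons \<open>b = c\<close> by auto
    then show ?thesis using Cons \<open>b = c\<close> by auto
  qed
qed

lemma bwd_det: "b < n \<Longrightarrow> set u \<subseteq> {..<n} \<Longrightarrow> set u' \<subseteq> {..<n} \<Longrightarrow>
  is_walk (asrc n ori) (atgt n ori) s u \<Longrightarrow> is_walk (asrc n ori) (atgt n ori) s' u' \<Longrightarrow>
  wend (atgt n ori) s u = asrc n ori b \<Longrightarrow> wend (atgt n ori) s' u' = asrc n ori b \<Longrightarrow>
  (\<exists>z. u' = z @ u) \<or> (\<exists>z. u = z @ u')"
proof (induction u arbitrary: b u' rule: rev_induct)
  case Nil then show ?case by simp
next
  case (snoc c v)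
  note IH = snoc.IH and pr = snoc.prems
  show ?case
  proof (cases u' rule: rev_exhaust)
    case Nil then show ?thesis by simp
  next
    case (snoc v' c')
    have cc: "c < n" "c' < n" "asrc n ori b = atgt n ori c" "asrc n ori b = atgt n ori c'"
      using pr snoc by (auto simp: wend_append)
    have "c = c'" using prev_unique[OF pr(1) cc] .
    have w: "is_walk (asrc n ori) (atgt n ori) s v" "wend (atgt n ori) s v = asrc n ori c"
      using pr(4) by (auto simp: is_walk_append)
    have w': "is_walk (asrc n ori) (atgt n ori) s' v'" "wend (atgt n ori) s' v' = asrc n ori c"
      using pr(5) snoc \<open>c = c'\<close> by (auto simp: is_walk_append)
    have "(\<exists>z. v' = z @ v) \<or> (\<exists>z. v = z @ v')"
      apply (rule IH[of c v'])
      using pr(2,3) snoc w w' cc by auto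
    then show ?thesis using snoc \<open>c = c'\<close> by auto
  qed
qed

lemma walk_start_eq: "is_walk (asrc n ori) (atgt n ori) s u \<Longrightarrow> is_walk (asrc n ori) (atgt n ori) y u \<Longrightarrow>
  wend (atgt n ori) s u = wend (atgt n ori) y u \<Longrightarrow> s = y"
  by (cases u) auto

lemma fwd_helper:
  assumes m: "maximal_path n ori \<mu>" and sm: "snd \<mu> = u @ b # w" and z: "set z \<subseteq> {..<n}"
    and wk: "is_walk (asrc n ori) (atgt n ori) (atgt n ori b) (w @ z)"
  shows "z = []"
proof (rule ccontr)
  assume zne: "z \<noteq> []"
  have mu: "\<mu> \<in> Paths n ori" using m by (simp add: maximal_path_def)
  have pe: "pend n ori \<mu> = wend (atgt n ori) (atgt n ori b) w"
    using sm by (simp add: pend_def wend_append)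
  have "asrc n ori (hd z) = pend n ori \<mu>"
    using wk zne pe by (cases z) (auto simp: is_walk_append)
  moreover have "hd z < n" using z zne hd_in_set by blast
  ultimately show False using max_sink[OF m] unfolding is_sink_def by blast
qed

lemma bwd_helper:
  assumes m: "maximal_path n ori \<mu>" and sm: "snd \<mu> = u @ b # w" and z: "set z \<subseteq> {..<n}"
    and wk: "is_walk (asrc n ori) (atgt n ori) y (z @ u)" and we: "wend (atgt n ori) y (z @ u) = asrc n ori b"
  shows "z = []"
proof (rule ccontr)
  assume zne: "z \<noteq> []"
  have mu: "\<mu> \<in> Paths n ori" using m by (simp add: maximal_path_def)
  obtain s as where pe: "\<mu> = (s, as)" by (cases \<mu>)
  have w1: "is_walk (asrc n ori) (atgt n ori) s (u @ b # w)" using mu pe sm by (simp add: Paths_def)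
  then have w2: "is_walk (asrc n ori) (atgt n ori) s u" "wend (atgt n ori) s u = asrc n ori b"
    by (auto simp: is_walk_append)
  have "wend (atgt n ori) y z = s"
    using walk_start_eq[of n ori s u "wend (atgt n ori) y z"] w2 wk we by (auto simp: is_walk_append wend_append)
  then have "atgt n ori (last z) = fst \<mu>" using zne pe by (simp add: wend_last)
  moreover have "last z < n" using z zne last_in_set by blast
  ultimately show False using max_source[OF m] unfolding is_source_def by blast
qed

lemma share_arrow:
  assumes m: "maximal_path n ori \<mu>" and m': "maximal_path n ori \<mu>'"
    and sm: "snd \<mu> = u @ b # w" and sm': "snd \<mu>' = u' @ b # w'"
  shows "\<mu> = \<mu>'"
proof -
  obtain s as where pe: "\<mu> = (s, as)" by (cases \<mu>)
  obtain s' as' where pe': "\<mu>' = (s', as')" by (cases \<mu>')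
  have P: "s < n" "set as \<subseteq> {..<n}" "is_walk (asrc n ori) (atgt n ori) s as"
    using m pe by (auto simp: maximal_path_def Paths_def)
  have P': "s' < n" "set as' \<subseteq> {..<n}" "is_walk (asrc n ori) (atgt n ori) s' as'"
    using m' pe' by (auto simp: maximal_path_def Paths_def)
  have b: "b < n" using P(2) sm pe by auto
  have wa: "is_walk (asrc n ori) (atgt n ori) s u" "wend (atgt n ori) s u = asrc n ori b"
     "is_walk (asrc n ori) (atgt n ori) (atgt n ori b) w"
    using P(3) sm pe by (auto simp: is_walk_append)
  have wa': "is_walk (asrc n ori) (atgt n ori) s' u'" "wend (atgt n ori) s' u' = asrc n ori b"
     "is_walk (asrc n ori) (atgt n ori) (atgt n ori b) w'"
    using P'(3) sm' pe' by (auto simp: is_walk_append)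
  have sets: "set u \<subseteq> {..<n}" "set w \<subseteq> {..<n}" "set u' \<subseteq> {..<n}" "set w' \<subseteq> {..<n}"
    using P(2) P'(2) sm sm' pe pe' by auto
  have "w = w'"
  proof -
    from fwd_det[OF b sets(2) sets(4) wa(3) wa'(3)] show ?thesis
    proof
      assume "\<exists>z. w' = w @ z"
      then obtain z where z: "w' = w @ z" by blast
      have "z = []" using fwd_helper[OF m sm, of z] z sets(4) wa'(3) by auto
      then show ?thesis using z by simp
    next
      assume "\<exists>z. w = w' @ z"
      then obtain z where z: "w = w' @ z" by blast
      have "z = []" using fwd_helper[OF m' sm', of z] z sets(2) wa(3) by auto
      then show ?thesis using z by simp
    qed
  qed
  moreover have "u = u'"
  proof -
    from bwd_det[OF b sets(1) sets(3) wa(1) wa'(1) wa(2) wa'(2)] show ?thesis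
    proof
      assume "\<exists>z. u' = z @ u"
      then obtain z where z: "u' = z @ u" by blast
      have "z = []" using bwd_helper[OF m sm, of z s'] z sets(3) wa'(1,2) by auto
      then show ?thesis using z by simp
    next
      assume "\<exists>z. u = z @ u'"
      then obtain z where z: "u = z @ u'" by blast
      have "z = []" using bwd_helper[OF m' sm', of z s] z sets(1) wa(1,2) by auto
      then show ?thesis using z by simp
    qed
  qed
  moreover have "s = s'" using walk_start_eq[of n ori s u s'] wa wa' \<open>u = u'\<close> by auto
  ultimately show ?thesis using pe pe' sm sm' by simp
qed


lemma vertex_on:
  assumes "subpath n ori (x, []) \<mu>" "\<mu> \<in> Paths n ori"
  shows "\<exists>u w. snd \<mu> = u @ w \<and> is_walk (asrc n ori) (atgt n ori) (fst \<mu>) u \<and> wend (atgt n ori) (fst \<mu>) u = x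
     \<and> is_walk (asrc n ori) (atgt n ori) x w \<and> set u \<subseteq> {..<n} \<and> set w \<subseteq> {..<n} \<and> pend n ori \<mu> = wend (atgt n ori) x w"
proof -
  obtain \<alpha> \<beta> where a: "\<alpha> \<in> Paths n ori" "\<beta> \<in> Paths n ori" "pend n ori \<beta> = x" "x = fst \<alpha>"
    "\<mu> = (fst \<beta>, snd \<beta> @ snd \<alpha>)" using assms(1) unfolding subpath_iff by auto
  have "is_walk (asrc n ori) (atgt n ori) (fst \<beta>) (snd \<beta> @ snd \<alpha>)" "set (snd \<beta> @ snd \<alpha>) \<subseteq> {..<n}"
    using assms(2) a(5) by (auto simp: Paths_def)
  then show ?thesis using a
    by (intro exI[of _ "snd \<beta>"] exI[of _ "snd \<alpha>"]) (auto simp: is_walk_append pend_def wend_append)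
qed

lemma on_max_end:
  assumes m: "maximal_path n ori \<mu>" and e: "snd \<mu> = u @ w" and wu: "is_walk (asrc n ori) (atgt n ori) (fst \<mu>) u"
    and x: "wend (atgt n ori) (fst \<mu>) u = x" and ww: "is_walk (asrc n ori) (atgt n ori) x w"
    and su: "set u \<subseteq> {..<n}" and sw: "set w \<subseteq> {..<n}" and pe: "pend n ori \<mu> = wend (atgt n ori) x w"
  shows "(is_source n ori x \<longrightarrow> fst \<mu> = x) \<and> (is_sink n ori x \<longrightarrow> pend n ori \<mu> = x)
    \<and> (\<not> is_source n ori x \<longrightarrow> u \<noteq> []) \<and> (\<not> is_sink n ori x \<longrightarrow> w \<noteq> [])"
proof (intro conjI impI)
  assume "is_source n ori x"
  show "fst \<mu> = x"
  proof (cases "u = []")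
    case True then show ?thesis using x by simp
  next
    case False
    then have "atgt n ori (last u) = x" "last u < n" using x wend_last[of u] su last_in_set by auto
    then show ?thesis using \<open>is_source n ori x\<close> unfolding is_source_def by blast
  qed
next
  assume "is_sink n ori x"
  show "pend n ori \<mu> = x"
  proof (cases "w = []")
    case True then show ?thesis using pe by simp
  next
    case False
    then have "asrc n ori (hd w) = x" "hd w < n" using ww sw hd_in_set by (cases w; auto)+
    then show ?thesis using \<open>is_sink n ori x\<close> unfolding is_sink_def by blast
  qed
next
  assume "\<not> is_source n ori x"
  then show "u \<noteq> []" using max_source[OF m] x by auto
next
  assume "\<not> is_sink n ori x"
  then show "w \<noteq> []" using max_sink[OF m] pe by auto
qed

lemma two_max:
  assumes m: "maximal_path n ori \<mu>" and m': "maximal_path n ori \<mu>'" and ne: "\<mu> \<noteq> \<mu>'"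
    and s1: "subpath n ori r \<mu>" and s2: "subpath n ori r \<mu>'" and r: "r \<in> Paths n ori"
  shows "snd r = [] \<and> (is_source n ori (fst r) \<or> is_sink n ori (fst r)) \<and> \<mu> \<in> ends n ori (fst r) \<and> \<mu>' \<in> ends n ori (fst r)"
proof -
  have nt: "snd r = []"
  proof (rule ccontr)
    assume "snd r \<noteq> []"
    then obtain b rest where br: "snd r = b # rest" by (cases "snd r") auto
    obtain \<alpha> \<beta> where "snd \<mu> = snd \<beta> @ b # (rest @ snd \<alpha>)" using s1 br unfolding subpath_iff by auto
    moreover obtain \<alpha>' \<beta>' where "snd \<mu>' = snd \<beta>' @ b # (rest @ snd \<alpha>')" using s2 br unfolding subpath_iff by auto
    ultimately have "\<mu> = \<mu>'" using share_arrow[OF m m'] by blast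
    then show False using ne by simp
  qed
  obtain x where rx: "r = (x, [])" using nt by (cases r) auto
  have mu: "\<mu> \<in> Paths n ori" "\<mu>' \<in> Paths n ori" using m m' by (auto simp: maximal_path_def)
  obtain u w where uw: "snd \<mu> = u @ w" "is_walk (asrc n ori) (atgt n ori) (fst \<mu>) u" "wend (atgt n ori) (fst \<mu>) u = x"
     "is_walk (asrc n ori) (atgt n ori) x w" "set u \<subseteq> {..<n}" "set w \<subseteq> {..<n}" "pend n ori \<mu> = wend (atgt n ori) x w"
    using vertex_on[OF _ mu(1)] s1 rx by blast
  obtain u' w' where uw': "snd \<mu>' = u' @ w'" "is_walk (asrc n ori) (atgt n ori) (fst \<mu>') u'" "wend (atgt n ori) (fst \<mu>') u' = x"
     "is_walk (asrc n ori) (atgt n ori) x w'" "set u' \<subseteq> {..<n}" "set w' \<subseteq> {..<n}" "pend n ori \<mu>' = wend (atgt n ori) x w'"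
    using vertex_on[OF _ mu(2)] s2 rx by blast
  note E = on_max_end[OF m uw] and E' = on_max_end[OF m' uw']
  have ss: "is_source n ori x \<or> is_sink n ori x"
  proof (rule ccontr)
    assume nss: "\<not> (is_source n ori x \<or> is_sink n ori x)"
    then have ne: "u \<noteq> []" "w \<noteq> []" "u' \<noteq> []" using E E' by auto
    have b: "atgt n ori (last u) = x" "atgt n ori (last u') = x" using uw(3) uw'(3) ne wend_last by metis+
    have c: "asrc n ori (hd w) = x" using uw(4) ne(2) by (cases w) auto
    have lt: "hd w < n" "last u < n" "last u' < n" using ne uw(5,6) uw'(5) hd_in_set last_in_set by blast+
    have "last u = last u'" using prev_unique[of "hd w" n "last u" "last u'" ori, OF lt(1) lt(2) lt(3)] b c by simp
    have "snd \<mu> = butlast u @ last u # w" using uw(1) ne(1) by simp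
    moreover have "snd \<mu>' = butlast u' @ last u # w'" using uw'(1) ne(3) \<open>last u = last u'\<close> by simp
    ultimately have "\<mu> = \<mu>'" using share_arrow[OF m m'] by blast
    then show False using \<open>\<mu> \<noteq> \<mu>'\<close> by simp
  qed
  have "\<mu> \<in> ends n ori x" "\<mu>' \<in> ends n ori x" using ss E E' m m' unfolding ends_def by auto
  then show ?thesis using nt ss rx by simp
qed

lemma ori_const: "is_walk (asrc n ori) (atgt n ori) x as \<Longrightarrow> set as \<subseteq> {..<n} \<Longrightarrow> a \<in> set as \<Longrightarrow> ori a = ori (hd as)"
proof (induction as arbitrary: x)
  case Nil then show ?case by simp
next
  case (Cons b as)
  show ?case
  proof (cases "a = b")
    case True then show ?thesis by simp
  next
    case False
    then have a: "a \<in> set as" using Cons.prems by simp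
    then have ne: "as \<noteq> []" by auto
    have "ori a = ori (hd as)" using Cons.IH[of "atgt n ori b"] Cons.prems a by auto
    moreover have "ori (hd as) = ori b"
      using ori_prop[of b n "hd as" ori] Cons.prems ne hd_in_set by (cases as) auto
    ultimately show ?thesis by simp
  qed
qed

lemma max_nontriv: "maximal_path n ori \<mu> \<Longrightarrow> snd \<mu> \<noteq> []"
  using max_source max_sink not_source_sink by (metis pend_def prod.collapse wend.simps(1))

lemma card_V_le_E:
  assumes fin: "finite (GammaE n ori)"
  shows "card (GammaV n ori) \<le> card (GammaE n ori)"
proof -
  define \<phi> where "\<phi> \<mu> = (if ori (hd (snd \<mu>)) then fst \<mu> else pend n ori \<mu>)" for \<mu>
  have img: "\<phi> ` GammaV n ori \<subseteq> GammaE n ori"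
    using max_source max_sink by (auto simp: \<phi>_def GammaV_def GammaE_def)
  have key: "\<mu> = \<mu>'" if m: "maximal_path n ori \<mu>" and m': "maximal_path n ori \<mu>'" and e: "\<phi> \<mu> = \<phi> \<mu>'" for \<mu> \<mu>'
  proof -
    obtain a rest where ar: "snd \<mu> = a # rest" using max_nontriv[OF m] by (cases "snd \<mu>") auto
    obtain a' rest' where ar': "snd \<mu>' = a' # rest'" using max_nontriv[OF m'] by (cases "snd \<mu>'") auto
    have P: "is_walk (asrc n ori) (atgt n ori) (fst \<mu>) (snd \<mu>)" "set (snd \<mu>) \<subseteq> {..<n}"
      using m by (cases \<mu>; auto simp: maximal_path_def Paths_def)+
    have P': "is_walk (asrc n ori) (atgt n ori) (fst \<mu>') (snd \<mu>')" "set (snd \<mu>') \<subseteq> {..<n}"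
      using m' by (cases \<mu>'; auto simp: maximal_path_def Paths_def)+
    have sa: "asrc n ori a = fst \<mu>" "asrc n ori a' = fst \<mu>'" using P(1) P'(1) ar ar' by auto
    consider "ori a" "ori a'" | "\<not> ori a" "\<not> ori a'" | "ori a" "\<not> ori a'" | "\<not> ori a" "ori a'" by blast
    then show ?thesis
    proof cases
      case 1
      then have "fst \<mu> = fst \<mu>'" using e ar ar' by (simp add: \<phi>_def)
      then have "a = a'" using sa 1 by (simp add: asrc_def)
      then show ?thesis using share_arrow[OF m m', of "[]" a rest "[]" rest'] ar ar' by simp
    next
      case 2
      then have pe: "pend n ori \<mu> = pend n ori \<mu>'" using e ar ar' by (simp add: \<phi>_def)
      have l: "ori (last (snd \<mu>)) = ori a" "ori (last (snd \<mu>')) = ori a'"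
        using ori_const[OF P(1) P(2), of "last (snd \<mu>)"] ori_const[OF P'(1) P'(2), of "last (snd \<mu>')"] ar ar'
        by auto
      have "pend n ori \<mu> = last (snd \<mu>)" using wend_last[of "snd \<mu>" "atgt n ori" "fst \<mu>"] ar l 2
        by (simp add: pend_def atgt_def)
      moreover have "pend n ori \<mu>' = last (snd \<mu>')" using wend_last[of "snd \<mu>'" "atgt n ori" "fst \<mu>'"] ar' l 2
        by (simp add: pend_def atgt_def)
      ultimately have ll: "last (snd \<mu>) = last (snd \<mu>')" using pe by simp
      have "snd \<mu> = butlast (snd \<mu>) @ last (snd \<mu>) # []" using ar by simp
      moreover have "snd \<mu>' = butlast (snd \<mu>') @ last (snd \<mu>) # []" using ar' ll by simp
      ultimately show ?thesis using share_arrow[OF m m'] by blast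
    next
      case 3
      then have "fst \<mu> = pend n ori \<mu>'" using e ar ar' by (simp add: \<phi>_def)
      then show ?thesis using max_source[OF m] max_sink[OF m'] not_source_sink by metis
    next
      case 4
      then have "pend n ori \<mu> = fst \<mu>'" using e ar ar' by (simp add: \<phi>_def)
      then show ?thesis using max_source[OF m'] max_sink[OF m] not_source_sink by metis
    qed
  qed
  have "inj_on \<phi> (GammaV n ori)" unfolding inj_on_def GammaV_def using key by blast
  then show ?thesis using card_inj_on_le[OF _ img fin] by blast
qed


definition spanP :: "nat \<Rightarrow> (nat \<Rightarrow> bool) \<Rightarrow> path set \<Rightarrow> (path \<Rightarrow> 'k::field) set" where
  "spanP n ori Y = {f \<in> kQ n ori. \<forall>p. f p \<noteq> 0 \<longrightarrow> p \<in> Y}"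

definition upcl :: "nat \<Rightarrow> (nat \<Rightarrow> bool) \<Rightarrow> path set \<Rightarrow> bool" where
  "upcl n ori Y \<longleftrightarrow> (\<forall>\<omega>\<in>Y. \<forall>s. subpath n ori \<omega> s \<longrightarrow> s \<in> Y)"

lemma pmul_subpath:
  assumes p: "p \<in> Paths n ori" and q: "q \<in> Paths n ori" and e: "pmul n ori p q = Some r"
  shows "subpath n ori p r" "subpath n ori q r" "r \<in> Paths n ori"
proof -
  have e': "pend n ori q = fst p" "r = (fst q, snd q @ snd p)" using e by (auto simp: pmul_Some)
  have rP: "r \<in> Paths n ori" and pr: "pend n ori r = pend n ori p" using Paths_concat[OF q p e'(1)] e'(2) by auto
  show "r \<in> Paths n ori" by (fact rP)
  show "subpath n ori p r" unfolding subpath_iff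
    apply (rule bexI[OF _ triv_Paths[OF pend_lt[OF p]]], rule bexI[OF _ q])
    using e' by auto
  show "subpath n ori q r" unfolding subpath_iff
    apply (rule bexI[OF _ p], rule bexI[OF _ triv_Paths[OF fst_lt[OF q]]])
    using e' by (auto simp: pend_def)
qed

lemma fact_fin: "finite {(p, q). p \<in> Paths n ori \<and> q \<in> Paths n ori \<and> pmul n ori p q = Some r}"
proof -
  define g where "g i = ((wend (atgt n ori) (fst r) (take i (snd r)), drop i (snd r)), (fst r, take i (snd r)))" for i
  have "{(p, q). p \<in> Paths n ori \<and> q \<in> Paths n ori \<and> pmul n ori p q = Some r} \<subseteq> g ` {..length (snd r)}"
  proof
    fix x assume "x \<in> {(p, q). p \<in> Paths n ori \<and> q \<in> Paths n ori \<and> pmul n ori p q = Some r}"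
    then obtain p q where x: "x = (p, q)" "pmul n ori p q = Some r" by auto
    then have e: "pend n ori q = fst p" "r = (fst q, snd q @ snd p)" by (auto simp: pmul_Some)
    have "x = g (length (snd q))" using x e by (cases p; cases q) (auto simp: g_def pend_def)
    moreover have "length (snd q) \<le> length (snd r)" using e by simp
    ultimately show "x \<in> g ` {..length (snd r)}" by blast
  qed
  then show ?thesis using finite_subset by blast
qed

lemma conv_nz:
  assumes "conv n ori f g r \<noteq> 0"
  shows "\<exists>p q. p \<in> Paths n ori \<and> q \<in> Paths n ori \<and> pmul n ori p q = Some r \<and> f p \<noteq> 0 \<and> g q \<noteq> 0"
proof -
  from assms obtain x where x: "x \<in> {(p, q). p \<in> Paths n ori \<and> q \<in> Paths n ori \<and> pmul n ori p q = Some r}"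
    "(case x of (p, q) \<Rightarrow> f p * g q) \<noteq> 0"
    unfolding conv_def by (rule sum.not_neutral_contains_not_neutral)
  then show ?thesis by (cases x) auto
qed

lemma zero_kQ: "(\<lambda>_. 0) \<in> kQ n ori" by (simp add: kQ_def)

lemma conv_kQ:
  assumes f: "f \<in> kQ n ori" and g: "g \<in> kQ n ori"
  shows "conv n ori f g \<in> kQ n ori"
proof -
  let ?F = "{p. f p \<noteq> 0}" and ?G = "{q. g q \<noteq> 0}"
  have fin: "finite ?F" "finite ?G" using f g by (auto simp: kQ_def)
  have "{r. conv n ori f g r \<noteq> 0} \<subseteq> (\<lambda>(p, q). (fst q, snd q @ snd p)) ` (?F \<times> ?G)"
  proof
    fix r assume "r \<in> {r. conv n ori f g r \<noteq> 0}"
    then obtain p q where "p \<in> Paths n ori" "q \<in> Paths n ori" "pmul n ori p q = Some r" "f p \<noteq> 0" "g q \<noteq> 0"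
      using conv_nz by blast
    then show "r \<in> (\<lambda>(p, q). (fst q, snd q @ snd p)) ` (?F \<times> ?G)" by (force simp: pmul_Some)
  qed
  moreover have "{r. conv n ori f g r \<noteq> 0} \<subseteq> Paths n ori"
    using conv_nz pmul_subpath(3) by blast
  ultimately show ?thesis using finite_subset[OF _ finite_imageI[OF finite_cartesian_product[OF fin]]]
    by (auto simp: kQ_def)
qed

lemma conv_delta:
  assumes p: "p \<in> Paths n ori" and q: "q \<in> Paths n ori" and e: "pmul n ori p q = Some r0"
  shows "conv n ori (delta p) (delta q) = (delta r0 :: path \<Rightarrow> 'k::field)"
proof
  fix r
  let ?S = "{(p, q). p \<in> Paths n ori \<and> q \<in> Paths n ori \<and> pmul n ori p q = Some r}"
  have "conv n ori (delta p) (delta q) r = (\<Sum>x\<in>?S. if x = (p, q) then (1::'k) else 0)"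
    unfolding conv_def by (rule sum.cong) (auto simp: delta_def split: if_splits)
  also have "\<dots> = (if (p, q) \<in> ?S then 1 else 0)"
    using sum.delta[OF fact_fin, of "(p, q)" "\<lambda>_. 1::'k"] by simp
  also have "\<dots> = (delta r0 r :: 'k)" using p q e by (auto simp: delta_def)
  finally show "conv n ori (delta p) (delta q) r = (delta r0 r :: 'k)" .
qed

lemma delta_kQ: "p \<in> Paths n ori \<Longrightarrow> delta p \<in> kQ n ori"
  by (auto simp: kQ_def delta_def)

lemma delta_nz: "delta p \<noteq> (\<lambda>_. 0::'k::field)"
  by (metis delta_def one_neq_zero)

lemma span_ideal:
  assumes up: "upcl n ori Y"
  shows "is_ideal n ori (spanP n ori Y :: (path \<Rightarrow> 'k::field) set)"
  unfolding is_ideal_def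
proof (intro conjI allI impI ballI)
  show "spanP n ori Y \<subseteq> kQ n ori" by (auto simp: spanP_def)
  show "(\<lambda>_. 0) \<in> (spanP n ori Y :: (path \<Rightarrow> 'k) set)" by (simp add: spanP_def zero_kQ)
next
  fix f g :: "path \<Rightarrow> 'k" assume f: "f \<in> spanP n ori Y" and g: "g \<in> spanP n ori Y"
  have "{r. f r + g r \<noteq> 0} \<subseteq> {r. f r \<noteq> 0} \<union> {r. g r \<noteq> 0}" by auto
  then show "(\<lambda>r. f r + g r) \<in> spanP n ori Y"
    using f g by (auto simp: spanP_def kQ_def intro: finite_subset)
next
  fix c :: 'k and f :: "path \<Rightarrow> 'k" assume f: "f \<in> spanP n ori Y"
  have "{r. c * f r \<noteq> 0} \<subseteq> {r. f r \<noteq> 0}" by auto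
  then show "(\<lambda>r. c * f r) \<in> spanP n ori Y"
    using f by (auto simp: spanP_def kQ_def intro: finite_subset)
next
  fix f g :: "path \<Rightarrow> 'k" assume f: "f \<in> spanP n ori Y" and g: "g \<in> kQ n ori"
  have fk: "f \<in> kQ n ori" using f by (simp add: spanP_def)
  show "conv n ori g f \<in> spanP n ori Y"
  proof -
    have "r \<in> Y" if nz: "conv n ori g f r \<noteq> 0" for r
    proof -
      obtain p q where pq: "p \<in> Paths n ori" "q \<in> Paths n ori" "pmul n ori p q = Some r" "g p \<noteq> 0" "f q \<noteq> 0"
        using conv_nz[OF nz] by blast
      have "q \<in> Y" using f pq(5) unfolding spanP_def by blast
      then show ?thesis using up pmul_subpath(2)[OF pq(1-3)] unfolding upcl_def by blast
    qed
    then show ?thesis using conv_kQ[OF g fk] by (auto simp: spanP_def)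
  qed
  show "conv n ori f g \<in> spanP n ori Y"
  proof -
    have "r \<in> Y" if nz: "conv n ori f g r \<noteq> 0" for r
    proof -
      obtain p q where pq: "p \<in> Paths n ori" "q \<in> Paths n ori" "pmul n ori p q = Some r" "f p \<noteq> 0" "g q \<noteq> 0"
        using conv_nz[OF nz] by blast
      have "p \<in> Y" using f pq(4) unfolding spanP_def by blast
      then show ?thesis using up pmul_subpath(1)[OF pq(1-3)] unfolding upcl_def by blast
    qed
    then show ?thesis using conv_kQ[OF fk g] by (auto simp: spanP_def)
  qed
qed

lemma in_ideal_fin:
  assumes K: "is_ideal n ori K" and d: "\<forall>r\<in>Y. delta r \<in> K"
  shows "finite F \<Longrightarrow> F \<subseteq> Y \<Longrightarrow> {p. f p \<noteq> 0} \<subseteq> F \<Longrightarrow> (f :: path \<Rightarrow> 'k::field) \<in> K"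
proof (induction F arbitrary: f rule: finite_induct)
  case empty
  then have "f = (\<lambda>_. 0)" by auto
  then show ?case using K by (simp add: is_ideal_def)
next
  case (insert a F)
  define f' where "f' x = (if x = a then 0 else f x)" for x
  have "f' \<in> K" using insert by (intro insert.IH) (auto simp: f'_def)
  moreover have "(\<lambda>r. f a * delta a r) \<in> K" using K d insert.prems by (auto simp: is_ideal_def)
  ultimately have "(\<lambda>r. f' r + f a * delta a r) \<in> K" using K by (auto simp: is_ideal_def)
  moreover have "(\<lambda>r. f' r + f a * delta a r) = f" by (auto simp: f'_def delta_def)
  ultimately show ?case by simp
qed


lemma lin_span:
  assumes "lin_semigroup_ideal n ori I"
  obtains X where "X \<subseteq> Paths n ori" "upcl n ori X" "I = spanP n ori X"
proof -
  from assms obtain X where X: "X \<subseteq> Paths n ori" "\<forall>\<omega>\<in>X. \<forall>\<alpha>\<in>Paths n ori. \<forall>\<beta>\<in>Paths n ori. \<forall>r s.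
         pmul n ori \<omega> \<beta> = Some r \<and> pmul n ori \<alpha> r = Some s \<longrightarrow> s \<in> X"
     "I = {f \<in> kQ n ori. \<forall>p. f p \<noteq> 0 \<longrightarrow> p \<in> X}" unfolding lin_semigroup_ideal_def by blast
  have "upcl n ori X" unfolding upcl_def subpath_def using X(2) by blast
  then show ?thesis using that X by (simp add: spanP_def)
qed

lemma delta_span: "p \<in> Paths n ori \<Longrightarrow> (delta p :: path \<Rightarrow> 'k::field) \<in> spanP n ori Y \<longleftrightarrow> p \<in> Y"
proof
  assume "p \<in> Paths n ori" "(delta p :: path \<Rightarrow> 'k::field) \<in> spanP n ori Y"
  moreover have "(delta p p :: 'k) \<noteq> 0" by (simp add: delta_def)
  ultimately show "p \<in> Y" unfolding spanP_def by blast
next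
  assume p: "p \<in> Paths n ori" "p \<in> Y"
  have "\<forall>q. (delta p q :: 'k) \<noteq> 0 \<longrightarrow> q \<in> Y" using p(2) by (simp add: delta_def)
  then show "(delta p :: path \<Rightarrow> 'k::field) \<in> spanP n ori Y" using delta_kQ[OF p(1)] by (simp add: spanP_def)
qed

lemma prod_eq:
  fixes XI XJ :: "path set"
  assumes XI: "XI \<subseteq> Paths n ori" "upcl n ori XI" and XJ: "XJ \<subseteq> Paths n ori" "upcl n ori XJ"
  defines "XP \<equiv> {r. \<exists>p\<in>XI. \<exists>q\<in>XJ. pmul n ori p q = Some r}"
  shows "XP \<subseteq> Paths n ori" "upcl n ori XP"
    "ideal_prod n ori (spanP n ori XI) (spanP n ori XJ) = (spanP n ori XP :: (path \<Rightarrow> 'k::field) set)"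
proof -
  show XPP: "XP \<subseteq> Paths n ori" using XI XJ pmul_subpath(3) unfolding XP_def by blast
  show up: "upcl n ori XP" unfolding upcl_def
  proof (intro ballI allI impI)
    fix r s assume r: "r \<in> XP" and rs: "subpath n ori r s"
    then obtain p q where pq: "p \<in> XI" "q \<in> XJ" "pmul n ori p q = Some r" unfolding XP_def by blast
    have pP: "p \<in> Paths n ori" and qP: "q \<in> Paths n ori" using pq XI XJ by auto
    have e: "pend n ori q = fst p" "r = (fst q, snd q @ snd p)" using pq(3) by (auto simp: pmul_Some)
    have pr: "pend n ori r = pend n ori p" using Paths_concat[OF qP pP e(1)] e(2) by simp
    obtain \<alpha> \<beta> where ab: "\<alpha> \<in> Paths n ori" "\<beta> \<in> Paths n ori" "pend n ori \<beta> = fst r" "pend n ori r = fst \<alpha>"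
      "s = (fst \<beta>, snd \<beta> @ snd r @ snd \<alpha>)" using rs unfolding subpath_iff by blast
    define q' where "q' = (fst \<beta>, snd \<beta> @ snd q)"
    define p' where "p' = (fst p, snd p @ snd \<alpha>)"
    have "subpath n ori q q'" unfolding subpath_iff
      apply (rule bexI[OF _ triv_Paths[OF pend_lt[OF qP]]], rule bexI[OF _ ab(2)])
      using ab(3) e by (auto simp: q'_def)
    then have q'J: "q' \<in> XJ" using XJ(2) pq(2) unfolding upcl_def by blast
    have "subpath n ori p p'" unfolding subpath_iff
      apply (rule bexI[OF _ ab(1)], rule bexI[OF _ triv_Paths[OF fst_lt[OF pP]]])
      using ab(4) pr by (auto simp: p'_def)
    then have p'I: "p' \<in> XI" using XI(2) pq(1) unfolding upcl_def by blast
    have "pend n ori q' = pend n ori q" using ab(3) e by (simp add: q'_def pend_def wend_append)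
    then have "pmul n ori p' q' = Some s" using e ab(5) by (simp add: pmul_Some p'_def q'_def)
    then show "s \<in> XP" using p'I q'J unfolding XP_def by blast
  qed
  have idl: "is_ideal n ori (spanP n ori XP :: (path \<Rightarrow> 'k) set)" by (rule span_ideal[OF up])
  have cont: "conv n ori f g \<in> spanP n ori XP"
    if f: "f \<in> spanP n ori XI" and g: "g \<in> spanP n ori XJ" for f g :: "path \<Rightarrow> 'k"
  proof -
    have "r \<in> XP" if nz: "conv n ori f g r \<noteq> 0" for r
    proof -
      obtain p q where pq: "p \<in> Paths n ori" "q \<in> Paths n ori" "pmul n ori p q = Some r" "f p \<noteq> 0" "g q \<noteq> 0"
        using conv_nz[OF nz] by blast
      have "p \<in> XI" using f pq(4) unfolding spanP_def by blast
      moreover have "q \<in> XJ" using g pq(5) unfolding spanP_def by blast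
      ultimately show ?thesis using pq(3) unfolding XP_def by blast
    qed
    moreover have "conv n ori f g \<in> kQ n ori" using f g conv_kQ by (auto simp: spanP_def)
    ultimately show ?thesis by (auto simp: spanP_def)
  qed
  show "ideal_prod n ori (spanP n ori XI) (spanP n ori XJ) = (spanP n ori XP :: (path \<Rightarrow> 'k) set)"
  proof
    show "ideal_prod n ori (spanP n ori XI) (spanP n ori XJ) \<subseteq> (spanP n ori XP :: (path \<Rightarrow> 'k) set)"
      unfolding ideal_prod_def using idl cont by (intro Inter_lower) blast
    show "(spanP n ori XP :: (path \<Rightarrow> 'k) set) \<subseteq> ideal_prod n ori (spanP n ori XI) (spanP n ori XJ)"
      unfolding ideal_prod_def
    proof (intro Inter_greatest subsetI)
      fix K :: "(path \<Rightarrow> 'k) set" and f :: "path \<Rightarrow> 'k" assume K: "K \<in> {K. is_ideal n ori K \<and> (\<forall>f\<in>spanP n ori XI. \<forall>g\<in>spanP n ori XJ. conv n ori f g \<in> K)}"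
        and f: "f \<in> spanP n ori XP"
      have d: "\<forall>r\<in>XP. delta r \<in> K"
      proof
        fix r assume "r \<in> XP"
        then obtain p q where pq: "p \<in> XI" "q \<in> XJ" "pmul n ori p q = Some r" unfolding XP_def by blast
        have pP: "p \<in> Paths n ori" and qP: "q \<in> Paths n ori" using pq XI XJ by auto
        have "(delta p :: path \<Rightarrow> 'k) \<in> spanP n ori XI" "(delta q :: path \<Rightarrow> 'k) \<in> spanP n ori XJ"
          using delta_span pP qP pq by blast+
        then have "conv n ori (delta p) (delta q) \<in> K" using K by blast
        moreover have "conv n ori (delta p) (delta q) = (delta r :: path \<Rightarrow> 'k)" by (rule conv_delta[OF pP qP pq(3)])
        ultimately show "delta r \<in> K" by simp
      qed
      have "finite {p. f p \<noteq> 0}" "{p. f p \<noteq> 0} \<subseteq> XP" using f by (auto simp: spanP_def kQ_def)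
      then show "f \<in> K" using in_ideal_fin[of n ori K XP "{p. f p \<noteq> 0}" f] K d by blast
    qed
  qed
qed

lemma decomp_general:
  assumes XP: "XP \<subseteq> Paths n ori" "upcl n ori XP" and P1: "P1 \<subseteq> XP" "upcl n ori P1" "upcl n ori (XP - P1)"
    and p1: "p1 \<in> P1" and p2: "p2 \<in> XP - P1"
  shows "decomposable n ori (spanP n ori XP :: (path \<Rightarrow> 'k::field) set)"
  unfolding decomposable_def
proof (intro exI conjI)
  let ?A = "spanP n ori P1 :: (path \<Rightarrow> 'k) set" and ?B = "spanP n ori (XP - P1) :: (path \<Rightarrow> 'k) set"
  show "is_ideal n ori ?A" by (rule span_ideal[OF P1(2)])
  show "is_ideal n ori ?B" by (rule span_ideal[OF P1(3)])
  have "delta p1 \<in> ?A" using delta_span[of p1 n ori P1] p1 P1(1) XP(1) by blast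
  then show "?A \<noteq> {\<lambda>_. 0}" using delta_nz[of p1] by blast
  have "delta p2 \<in> ?B" using delta_span[of p2 n ori "XP - P1"] p2 XP(1) by blast
  then show "?B \<noteq> {\<lambda>_. 0}" using delta_nz[of p2] by blast
  show "?A \<inter> ?B = {\<lambda>_. 0}"
  proof
    show "?A \<inter> ?B \<subseteq> {\<lambda>_. 0}"
    proof
      fix f assume "f \<in> ?A \<inter> ?B"
      then have "\<forall>p. f p = 0" unfolding spanP_def by blast
      then show "f \<in> {\<lambda>_. 0}" by auto
    qed
    show "{\<lambda>_. 0} \<subseteq> ?A \<inter> ?B" using span_ideal[OF P1(2)] span_ideal[OF P1(3)]
      by (auto simp: is_ideal_def)
  qed
  show "spanP n ori XP = {\<lambda>r. a r + b r |a b. a \<in> ?A \<and> b \<in> ?B}"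
  proof
    show "spanP n ori XP \<subseteq> {\<lambda>r. a r + b r |a b. a \<in> ?A \<and> b \<in> ?B}"
    proof
      fix f :: "path \<Rightarrow> 'k" assume f: "f \<in> spanP n ori XP"
      define a where "a r = (if r \<in> P1 then f r else 0)" for r
      define b where "b r = (if r \<in> P1 then 0 else f r)" for r
      have fin: "finite {p. f p \<noteq> 0}" "{p. f p \<noteq> 0} \<subseteq> Paths n ori" "\<forall>p. f p \<noteq> 0 \<longrightarrow> p \<in> XP"
        using f by (auto simp: spanP_def kQ_def)
      have "{p. a p \<noteq> 0} \<subseteq> {p. f p \<noteq> 0}" "{p. b p \<noteq> 0} \<subseteq> {p. f p \<noteq> 0}" by (auto simp: a_def b_def)
      then have "a \<in> ?A" "b \<in> ?B" using fin by (auto simp: spanP_def kQ_def a_def b_def intro: finite_subset)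
      moreover have "f = (\<lambda>r. a r + b r)" by (auto simp: a_def b_def)
      ultimately show "f \<in> {\<lambda>r. a r + b r |a b. a \<in> ?A \<and> b \<in> ?B}" by blast
    qed
    show "{\<lambda>r. a r + b r |a b. a \<in> ?A \<and> b \<in> ?B} \<subseteq> spanP n ori XP"
    proof
      fix h assume "h \<in> {\<lambda>r. a r + b r |a b. a \<in> ?A \<and> b \<in> ?B}"
      then obtain a b where ab: "a \<in> ?A" "b \<in> ?B" "h = (\<lambda>r. a r + b r)" by blast
      have sub: "{r. h r \<noteq> 0} \<subseteq> {r. a r \<noteq> 0} \<union> {r. b r \<noteq> 0}" using ab(3) by auto
      have A: "\<forall>r. a r \<noteq> 0 \<longrightarrow> r \<in> P1" "\<forall>r. b r \<noteq> 0 \<longrightarrow> r \<in> XP" using ab(1,2) unfolding spanP_def by blast+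
      have K: "a \<in> kQ n ori" "b \<in> kQ n ori" using ab(1,2) unfolding spanP_def by blast+
      have "\<forall>r. h r \<noteq> 0 \<longrightarrow> r \<in> XP" using sub A P1(1) by blast
      moreover have "finite {r. h r \<noteq> 0}"
      proof -
        have "finite {r. a r \<noteq> 0}" "finite {r. b r \<noteq> 0}" using K unfolding kQ_def by blast+
        then show ?thesis using finite_subset[OF sub] by blast
      qed
      moreover have "{r. h r \<noteq> 0} \<subseteq> Paths n ori" using sub K unfolding kQ_def by blast
      ultimately show "h \<in> spanP n ori XP" by (simp add: spanP_def kQ_def)
    qed
  qed
qed


theorem corollary26:
  fixes n :: nat and ori :: "nat \<Rightarrow> bool" and I J :: "(path \<Rightarrow> 'k::field) set"
  assumes alg_closed: "\<forall>p :: 'k poly. 0 < degree p \<longrightarrow> (\<exists>x. poly p x = 0)"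
    and adm: "admissible n ori"
    and linI: "lin_semigroup_ideal n ori I" and linJ: "lin_semigroup_ideal n ori J"
    and indI: "indecomposable n ori I" and indJ: "indecomposable n ori J"
    and IIa: "type_II n ori I" and IIb: "type_II n ori J"
    and unionV: "GammaIV n ori I \<union> GammaIV n ori J = GammaV n ori"
    and unionE: "GammaIE n ori I \<union> GammaIE n ori J = GammaE n ori"
    and isolated: "\<forall>\<omega> \<in> GammaIV n ori I \<inter> GammaIV n ori J.
        (\<forall>x \<in> GammaIE n ori I \<inter> GammaIE n ori J. \<omega> \<notin> ends n ori x) \<longrightarrow>
        (\<forall>x \<in> GammaIE n ori J. \<omega> \<in> ends n ori x \<longrightarrow> is_source n ori x)"
  shows "decomposable n ori (ideal_prod n ori I J)"
proof -
  obtain XI where XI: "XI \<subseteq> Paths n ori" "upcl n ori XI" "I = spanP n ori XI" using lin_span[OF linI] by blast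
  obtain XJ where XJ: "XJ \<subseteq> Paths n ori" "upcl n ori XJ" "J = spanP n ori XJ" using lin_span[OF linJ] by blast
  define XP where "XP = {r. \<exists>p\<in>XI. \<exists>q\<in>XJ. pmul n ori p q = Some r}"
  have XPP: "XP \<subseteq> Paths n ori" "upcl n ori XP" using prod_eq(1,2)[OF XI(1,2) XJ(1,2)] unfolding XP_def by auto
  have prodeq: "ideal_prod n ori I J = spanP n ori XP"
    using prod_eq(3)[OF XI(1,2) XJ(1,2)] XI(3) XJ(3) unfolding XP_def by simp
  let ?VI = "GammaIV n ori I" and ?VJ = "GammaIV n ori J" and ?EI = "GammaIE n ori I" and ?EJ = "GammaIE n ori J"
  obtain vs es where ch: "distinct vs" "distinct es" "set vs = ?VI" "set es = ?EI"
     "length vs = Suc (length es)" "\<forall>i<length es. ends n ori (es ! i) = {vs ! i, vs ! Suc i}"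
    using IIa unfolding type_II_def is_chain_def by blast
  obtain vs' es' where ch': "distinct vs'" "distinct es'" "set vs' = ?VJ" "set es' = ?EJ"
     "length vs' = Suc (length es')" "\<forall>i<length es'. ends n ori (es' ! i) = {vs' ! i, vs' ! Suc i}"
    using IIb unfolding type_II_def is_chain_def by blast
  have c2: "2 \<le> card ?VJ" using IIb unfolding type_II_def by blast
  have VI: "maximal_path n ori \<mu> \<and> \<mu> \<in> XI" if "\<mu> \<in> ?VI" for \<mu>
  proof -
    have m: "maximal_path n ori \<mu>" "delta \<mu> \<in> I" using that by (auto simp: GammaIV_def)
    then have "\<mu> \<in> Paths n ori" by (simp add: maximal_path_def)
    then show ?thesis using m delta_span XI(3) by blast
  qed
  have VJ: "maximal_path n ori \<mu> \<and> \<mu> \<in> XJ" if "\<mu> \<in> ?VJ" for \<mu>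
  proof -
    have m: "maximal_path n ori \<mu>" "delta \<mu> \<in> J" using that by (auto simp: GammaIV_def)
    then have "\<mu> \<in> Paths n ori" by (simp add: maximal_path_def)
    then show ?thesis using m delta_span XJ(3) by blast
  qed
  have EI: "(x, []) \<in> XI" if "x \<in> ?EI" for x
  proof -
    have m: "is_source n ori x \<or> is_sink n ori x" "delta (x, []) \<in> I" using that by (auto simp: GammaIE_def)
    then have "x < n" by (auto simp: is_source_def is_sink_def)
    then show ?thesis using m delta_span[OF triv_Paths] XI(3) by blast
  qed
  have EJ: "(x, []) \<in> XJ" if "x \<in> ?EJ" for x
  proof -
    have m: "is_source n ori x \<or> is_sink n ori x" "delta (x, []) \<in> J" using that by (auto simp: GammaIE_def)
    then have "x < n" by (auto simp: is_source_def is_sink_def)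
    then show ?thesis using m delta_span[OF triv_Paths] XJ(3) by blast
  qed
  have F3: "\<omega> \<in> XP" if w: "\<omega> \<in> ?VI" "\<omega> \<in> ?VJ" for \<omega>
  proof -
    have wI: "\<omega> \<in> XI" "maximal_path n ori \<omega>" using VI[OF w(1)] by auto
    have wJ: "\<omega> \<in> XJ" using VJ[OF w(2)] by auto
    have left: "\<omega> \<in> XP" if "fst \<omega> = y" "(y, []) \<in> XJ" for y
    proof -
      have "pmul n ori \<omega> (y, []) = Some \<omega>" using that by (cases \<omega>) (auto simp: pmul_Some)
      then show ?thesis using wI that unfolding XP_def by blast
    qed
    have right: "\<omega> \<in> XP" if "pend n ori \<omega> = y" "(y, []) \<in> XI" for y
    proof -
      have "pmul n ori (y, []) \<omega> = Some \<omega>" using that by (cases \<omega>) (auto simp: pmul_Some)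
      then show ?thesis using wJ that unfolding XP_def by blast
    qed
    show ?thesis
    proof (cases "\<exists>y\<in>?EI \<inter> ?EJ. \<omega> \<in> ends n ori y")
      case True
      then obtain y where y: "y \<in> ?EI" "y \<in> ?EJ" "fst \<omega> = y \<or> pend n ori \<omega> = y" by (auto simp: ends_def)
      then show ?thesis using left right EI EJ by blast
    next
      case False
      then have src: "\<forall>x\<in>?EJ. \<omega> \<in> ends n ori x \<longrightarrow> is_source n ori x" using isolated w by blast
      obtain j where j: "j < length vs'" "vs' ! j = \<omega>" using w(2) ch'(3) by (metis in_set_conv_nth)
      have L1: "1 \<le> length es'" using c2 ch'(1,3,5) distinct_card by fastforce
      obtain x where x: "x \<in> ?EJ" "\<omega> \<in> ends n ori x"
      proof (cases "j < length es'")
        case True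
        have "es' ! j \<in> ?EJ" using True ch'(4) nth_mem by blast
        moreover have "\<omega> \<in> ends n ori (es' ! j)" using ch'(6) True j by auto
        ultimately show ?thesis using that by blast
      next
        case False
        then have "j = Suc (j - 1)" "j - 1 < length es'" using j ch'(5) L1 by auto
        then show ?thesis using that[of "es' ! (j - 1)"] ch'(4,6) j by (metis insert_iff nth_mem)
      qed
      have xs: "is_source n ori x" using src x by blast
      have "fst \<omega> = x"
      proof -
        have "fst \<omega> = x \<or> pend n ori \<omega> = x" using x(2) by (simp add: ends_def)
        then show ?thesis using max_sink[OF wI(2)] xs not_source_sink by metis
      qed
      then show ?thesis using left EJ x(1) by blast
    qed
  qed
  define L where "L = length es"
  define S where "S = {i. i < L \<and> es ! i \<in> ?EJ}"
  define T where "T = {j. j \<le> L \<and> vs ! j \<in> ?VJ}"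
  have finE: "finite (GammaE n ori)" using unionE ch(4) ch'(4) by (metis List.finite_set finite_Un)
  have cVE: "card (GammaV n ori) \<le> card (GammaE n ori)" by (rule card_V_le_E[OF finE])
  have cS: "card S = card (?EI \<inter> ?EJ)"
  proof -
    have "nth es ` S = ?EI \<inter> ?EJ"
    proof
      show "nth es ` S \<subseteq> ?EI \<inter> ?EJ"
      proof
        fix x assume "x \<in> nth es ` S"
        then obtain i where "i < length es" "es ! i \<in> ?EJ" "x = es ! i" unfolding S_def L_def by blast
        then show "x \<in> ?EI \<inter> ?EJ" using ch(4) nth_mem by blast
      qed
      show "?EI \<inter> ?EJ \<subseteq> nth es ` S"
      proof
        fix x assume x: "x \<in> ?EI \<inter> ?EJ"
        then obtain i where "i < length es" "es ! i = x" using ch(4) by (metis IntD1 in_set_conv_nth)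
        then show "x \<in> nth es ` S" using x unfolding S_def L_def by blast
      qed
    qed
    moreover have "inj_on (nth es) S" using ch(2) unfolding S_def L_def inj_on_def
      by (simp add: nth_eq_iff_index_eq)
    ultimately show ?thesis using card_image by fastforce
  qed
  have cT: "card T = card (?VI \<inter> ?VJ)"
  proof -
    have "nth vs ` T = ?VI \<inter> ?VJ"
    proof
      show "nth vs ` T \<subseteq> ?VI \<inter> ?VJ"
      proof
        fix x assume "x \<in> nth vs ` T"
        then obtain i where "i \<le> L" "vs ! i \<in> ?VJ" "x = vs ! i" unfolding T_def by blast
        then have "i < length vs" "vs ! i \<in> ?VJ" "x = vs ! i" using ch(5) unfolding L_def by auto
        then show "x \<in> ?VI \<inter> ?VJ" using ch(3) nth_mem by blast
      qed
      show "?VI \<inter> ?VJ \<subseteq> nth vs ` T"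
      proof
        fix x assume x: "x \<in> ?VI \<inter> ?VJ"
        then obtain i where "i < length vs" "vs ! i = x" using ch(3) by (metis IntD1 in_set_conv_nth)
        then show "x \<in> nth vs ` T" using x ch(5) unfolding T_def L_def by auto
      qed
    qed
    moreover have "inj_on (nth vs) T" using ch(1,5) unfolding T_def L_def inj_on_def
      by (simp add: nth_eq_iff_index_eq)
    ultimately show ?thesis using card_image by fastforce
  qed
  have cards: "card ?VI = Suc L" "card ?VJ = Suc (length es')" "card ?EI = L" "card ?EJ = length es'"
    using distinct_card[OF ch(1)] distinct_card[OF ch'(1)] distinct_card[OF ch(2)] distinct_card[OF ch'(2)]
      ch(3,4,5) ch'(3,4,5) unfolding L_def by simp_all
  have "card (?VI \<union> ?VJ) + card (?VI \<inter> ?VJ) = card ?VI + card ?VJ"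
    using ch(3) ch'(3) by (metis List.finite_set card_Un_Int)
  moreover have "card (?EI \<union> ?EJ) + card (?EI \<inter> ?EJ) = card ?EI + card ?EJ"
    using ch(4) ch'(4) by (metis List.finite_set card_Un_Int)
  ultimately have cTS: "card S + 2 \<le> card T" using cVE unionV unionE cards cS cT by simp
  have finT: "finite T" unfolding T_def by simp
  have Tne: "T \<noteq> {}" using cTS by auto
  define a where "a = Min T"
  define b where "b = Max T"
  have aT: "a \<in> T" and bT: "b \<in> T" using finT Tne unfolding a_def b_def by auto
  have Tab: "T \<subseteq> {a..b}" using finT unfolding a_def b_def by auto
  obtain k where k: "a \<le> k" "k < b" "k \<notin> S"
  proof (rule ccontr)
    assume "\<not> thesis"
    then have "{a..<b} \<subseteq> S" using that by (meson atLeastLessThan_iff subsetI)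
    then have "b - a \<le> card S" using card_mono[of S "{a..<b}"] unfolding S_def by auto
    moreover have "card T \<le> Suc b - a" using card_mono[OF _ Tab] by simp
    ultimately show False using cTS by linarith
  qed
  have bL: "b \<le> L" using bT unfolding T_def by simp
  define M1 where "M1 = (\<lambda>j. vs ! j) ` {..k}"
  define P1 where "P1 = {r \<in> XP. \<exists>\<mu>\<in>M1. subpath n ori r \<mu>}"
  have vsV: "vs ! j \<in> ?VI" if "j \<le> L" for j
  proof -
    have "j < length vs" using that ch(5) unfolding L_def by simp
    then show ?thesis using ch(3) nth_mem by blast
  qed
  have vinj: "i = j" if "vs ! i = vs ! j" "i \<le> L" "j \<le> L" for i j
  proof -
    have i: "i < length vs" using that(2) ch(5) unfolding L_def by linarith
    have j: "j < length vs" using that(3) ch(5) unfolding L_def by linarith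
    show ?thesis using iffD1[OF nth_eq_iff_index_eq[OF ch(1) i j] that(1)] .
  qed
  have M1max: "maximal_path n ori \<mu>" if m1: "\<mu> \<in> M1" for \<mu>
  proof -
    obtain j where "j \<le> k" "\<mu> = vs ! j" using m1 unfolding M1_def by blast
    moreover have "j \<le> L" using \<open>j \<le> k\<close> k bL by linarith
    ultimately show ?thesis using VI[OF vsV[of j]] by simp
  qed
  have pa: "vs ! a \<in> P1"
  proof -
    have "a \<le> L" "vs ! a \<in> ?VJ" using aT unfolding T_def by blast+
    then have "vs ! a \<in> XP" using F3 vsV by blast
    moreover have "subpath n ori (vs ! a) (vs ! a)"
    proof -
      have "a \<le> L" using aT unfolding T_def by blast
      then have "maximal_path n ori (vs ! a)" using VI[OF vsV] by blast
      then show ?thesis using subpath_refl unfolding maximal_path_def by blast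
    qed
    moreover have "vs ! a \<in> M1" using k unfolding M1_def by auto
    ultimately show ?thesis unfolding P1_def by blast
  qed
  have pb: "vs ! b \<in> XP - P1"
  proof -
    have "vs ! b \<in> ?VJ" using bT unfolding T_def by blast
    then have inX: "vs ! b \<in> XP" using F3 vsV bL by blast
    have mb: "maximal_path n ori (vs ! b)" using VI[OF vsV[OF bL]] by blast
    have "vs ! b \<notin> P1"
    proof
      assume "vs ! b \<in> P1"
      then obtain \<mu> where "\<mu> \<in> M1" "subpath n ori (vs ! b) \<mu>" unfolding P1_def by blast
      then obtain j where j: "j \<le> k" "subpath n ori (vs ! b) (vs ! j)" unfolding M1_def by blast
      have "vs ! j \<in> M1" using j(1) unfolding M1_def by blast
      then have "vs ! j \<in> Paths n ori" using M1max unfolding maximal_path_def by blast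
      then have "vs ! j = vs ! b" using mb j(2) unfolding maximal_path_def by blast
      moreover have "j \<le> L" using j(1) k bL by linarith
      ultimately have "j = b" using vinj bL by blast
      then show False using j(1) k by simp
    qed
    then show ?thesis using inX by blast
  qed
  have side: "\<mu>' \<in> M1" if sd: "x \<in> ?EI" "x \<in> ?EJ" "\<mu> \<in> ends n ori x" "\<mu>' \<in> ends n ori x" "\<mu> \<in> M1" for x \<mu> \<mu>'
  proof -
    obtain i where i: "i < L" "es ! i = x" using sd(1) ch(4) unfolding L_def by (metis in_set_conv_nth)
    have iS: "i \<in> S" using i that(2) unfolding S_def by auto
    have en: "ends n ori x = {vs ! i, vs ! Suc i}" using ch(6) i unfolding L_def by auto
    obtain j where j: "j \<le> k" "\<mu> = vs ! j" using sd(5) unfolding M1_def by blast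
    have jL: "j \<le> L" "i \<le> L" "Suc i \<le> L" using j k bL i by auto
    have "vs ! j = vs ! i \<or> vs ! j = vs ! Suc i" using that(3) en j by blast
    then have "j = i \<or> j = Suc i" using vinj jL by blast
    moreover have "i \<noteq> k" using iS k by blast
    ultimately have "Suc i \<le> k" using j by linarith
    then have "i \<in> {..k}" "Suc i \<in> {..k}" by auto
    moreover have "\<mu>' = vs ! i \<or> \<mu>' = vs ! Suc i" using that(4) en by blast
    ultimately show ?thesis unfolding M1_def by blast
  qed
  have up1: "upcl n ori P1" unfolding upcl_def
  proof (intro ballI allI impI)
    fix r s assume r: "r \<in> P1" and rs: "subpath n ori r s"
    then obtain \<mu> where \<mu>: "\<mu> \<in> M1" "subpath n ori r \<mu>" "r \<in> XP" unfolding P1_def by blast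
    have rP: "r \<in> Paths n ori" using \<mu>(3) XPP(1) by blast
    have sX: "s \<in> XP" using XPP(2) \<mu>(3) rs unfolding upcl_def by blast
    have sP: "s \<in> Paths n ori" using sX XPP(1) by blast
    obtain \<mu>' where \<mu>': "maximal_path n ori \<mu>'" "subpath n ori s \<mu>'" using exists_max[OF adm sP] by blast
    have r\<mu>': "subpath n ori r \<mu>'" using subpath_trans[OF rs \<mu>'(2) rP] .
    have "\<mu>' \<in> M1"
    proof (cases "\<mu>' = \<mu>")
      case True then show ?thesis using \<mu> by simp
    next
      case False
      have tm: "snd r = [] \<and> (is_source n ori (fst r) \<or> is_sink n ori (fst r)) \<and> \<mu> \<in> ends n ori (fst r) \<and> \<mu>' \<in> ends n ori (fst r)"
        using two_max[OF M1max[OF \<mu>(1)] \<mu>'(1) _ \<mu>(2) r\<mu>' rP] False by metis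
      obtain p q where pq: "p \<in> XI" "q \<in> XJ" "pmul n ori p q = Some r" using \<mu>(3) unfolding XP_def by blast
      have "p = (fst r, [])" "q = (fst r, [])" using pq(3) tm by (auto simp: pmul_Some pend_def prod_eq_iff)
      then have "(fst r, []) \<in> XI" "(fst r, []) \<in> XJ" using pq by auto
      then have "fst r \<in> ?EI" "fst r \<in> ?EJ"
        using tm XI(3) XJ(3) delta_span[OF triv_Paths, of "fst r" n] fst_lt[OF rP]
        unfolding GammaIE_def by auto
      then show ?thesis using side tm \<mu>(1) by blast
    qed
    then show "s \<in> P1" using sX \<mu>'(2) unfolding P1_def by blast
  qed
  have up2: "upcl n ori (XP - P1)" unfolding upcl_def
  proof (intro ballI allI impI)
    fix r s assume r: "r \<in> XP - P1" and rs: "subpath n ori r s"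
    have rP: "r \<in> Paths n ori" using r XPP(1) by blast
    have sX: "s \<in> XP" using XPP(2) r rs unfolding upcl_def by blast
    have "s \<notin> P1"
    proof
      assume "s \<in> P1"
      then obtain \<mu> where "\<mu> \<in> M1" "subpath n ori s \<mu>" unfolding P1_def by blast
      then have "subpath n ori r \<mu>" using subpath_trans[OF rs _ rP] by blast
      then show False using r \<open>\<mu> \<in> M1\<close> unfolding P1_def by blast
    qed
    then show "s \<in> XP - P1" using sX by blast
  qed
  have "decomposable n ori (spanP n ori XP :: (path \<Rightarrow> 'k) set)"
    by (rule decomp_general[OF XPP _ up1 up2 pa pb]) (auto simp: P1_def)
  then show ?thesis using prodeq by simp
qed

end
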